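(* For $\epsilon>0$ and $\Delta\in\mathbb{R}$ let $\mathrm{LB}(\alpha,\epsilon,\Delta):=\alpha\Delta+\alpha\int_{\alpha}^{1}\frac{1-t}{t(1-t)+\epsilon}\,dt+(1-\alpha)\int_{0}^{\alpha}\frac{t}{t(1-t)+\epsilon}\,dt$ for $\alpha\in[0,1]$. Then $$\frac{\partial\,\mathrm{LB}(\alpha,\epsilon,\Delta)}{\partial\alpha}=\Delta+\frac{1}{\sqrt{1+4\epsilon}}\log\left|\frac{\alpha-\frac{1+\sqrt{1+4\epsilon}}{2}}{\alpha-\frac{1-\sqrt{1+4\epsilon}}{2}}\right|,\qquad \frac{\partial^{2}\,\mathrm{LB}(\alpha,\epsilon,\Delta)}{\partial\alpha^{2}}=-\frac{1}{\alpha(1-\alpha)+\epsilon},$$ and consequently $\alpha\mapsto\mathrm{LB}(\alpha,\epsilon,\Delta)$ is strictly concave on $[0,1]$. *)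

theory Defs
  imports "HOL-Analysis.Analysis"
begin

definition LB :: "real \<Rightarrow> real \<Rightarrow> real \<Rightarrow> real" where
  "LB \<alpha> \<epsilon> \<Delta> =
     \<alpha> * \<Delta>
     + \<alpha> * integral {\<alpha>..1} (\<lambda>t. (1 - t) / (t * (1 - t) + \<epsilon>))
     + (1 - \<alpha>) * integral {0..\<alpha>} (\<lambda>t. t / (t * (1 - t) + \<epsilon>))"

definition strictly_concave_on :: "real set \<Rightarrow> (real \<Rightarrow> real) \<Rightarrow> bool" where
  "strictly_concave_on S f \<longleftrightarrow> convex S \<and>
     (\<forall>x\<in>S. \<forall>y\<in>S. \<forall>u::real. x \<noteq> y \<and> 0 < u \<and> u < 1 \<longrightarrow>
        f (u * x + (1 - u) * y) > u * f x + (1 - u) * f y)"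

end

theory Submission
  imports Defs
begin

definition "sq e = sqrt (1 + 4 * e)"
definition "R1 e = (1 + sq e) / 2"
definition "R2 e = (1 - sq e) / 2"
definition "PP e t = -(R1 e / sq e) * ln (R1 e - t) + (R2 e / sq e) * ln (t - R2 e)"
definition "QQ e t = -(R2 e / sq e) * ln (R1 e - t) + (R1 e / sq e) * ln (t - R2 e)"
definition "hh e t = (1 / sq e) * (ln (R1 e - t) - ln (t - R2 e))"
definition "LL e D a = a * D + a * (QQ e 1 - QQ e a) + (1 - a) * (PP e a - PP e 0)"

lemma basics:
  assumes "(e::real) > 0"
  shows "sq e > 1" "R2 e < 0" "R1 e > 1" "R1 e + R2 e = 1" "R1 e - R2 e = sq e" "R1 e * R2 e = - e"
proof -
  have "0 \<le> 1 + 4 * e" using assms by linarith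
  then have s2: "sq e ^ 2 = 1 + 4 * e" unfolding sq_def by (rule real_sqrt_pow2)
  have "sq e \<ge> 0" using assms by (simp add: sq_def)
  then show s1: "sq e > 1" using s2 assms by (smt (verit) power2_eq_square mult_le_one)
  then show "R2 e < 0" "R1 e > 1" "R1 e + R2 e = 1" "R1 e - R2 e = sq e" by (auto simp: R1_def R2_def field_simps)
  show "R1 e * R2 e = - e" using s2 by (simp add: R1_def R2_def field_simps power2_eq_square)
qed

lemma qfact: assumes "(e::real) > 0" shows "t * (1 - t) + e = (R1 e - t) * (t - R2 e)"
proof -
  from basics[OF assms] have "R1 e + R2 e = 1" "R1 e * R2 e = - e" by auto
  then show ?thesis by algebra
qed

lemma alg1: fixes a b t :: real assumes "a - t > 0" "t - b > 0" "a - b > 0"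
  shows "(a / (a - b)) / (a - t) + (b / (a - b)) / (t - b) = t / ((a - t) * (t - b))"
proof -
  define x where "x = a - t"
  define y where "y = t - b"
  have a: "a = t + x" "b = t - y" "a - b = x + y" by (auto simp: x_def y_def)
  have "x > 0" "y > 0" "x + y > 0" using assms by (auto simp: x_def y_def)
  then show ?thesis unfolding a x_def[symmetric] y_def[symmetric]
    apply (simp add: divide_simps)
    apply algebra
    done
qed

lemma dP: assumes "(e::real) > 0" "R2 e < t" "t < R1 e"
  shows "(PP e has_real_derivative t / (t * (1 - t) + e)) (at t)"
proof -
  note b = basics[OF assms(1)]
  have sp: "sq e > 0" using b(1) by linarith
  have "(PP e has_real_derivative (R1 e / sq e) / (R1 e - t) + (R2 e / sq e) / (t - R2 e)) (at t)"
    unfolding PP_def[abs_def] using assms b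
    by (auto intro!: derivative_eq_intros simp: mult.commute add.commute)
  moreover have "(R1 e / sq e) / (R1 e - t) + (R2 e / sq e) / (t - R2 e) = t / (t * (1 - t) + e)"
    using assms b unfolding qfact[OF assms(1)]
    using alg1[of "R1 e" t "R2 e"] by (simp add: b sp)
  ultimately show ?thesis by simp
qed

lemma alg2: fixes a b t :: real assumes "a - t > 0" "t - b > 0" "a - b > 0" "a + b = 1"
  shows "(b / (a - b)) / (a - t) + (a / (a - b)) / (t - b) = (1 - t) / ((a - t) * (t - b))"
proof -
  define x where "x = a - t"
  define y where "y = t - b"
  have a: "a = t + x" "b = t - y" "a - b = x + y" by (auto simp: x_def y_def)
  have "x > 0" "y > 0" "x + y > 0" using assms by (auto simp: x_def y_def)
  moreover have "2 * t + x - y = 1" using assms(4) unfolding a by simp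
  ultimately show ?thesis unfolding a x_def[symmetric] y_def[symmetric]
    apply (simp add: divide_simps)
    apply algebra
    done
qed

lemma dQ: assumes "(e::real) > 0" "R2 e < t" "t < R1 e"
  shows "(QQ e has_real_derivative (1 - t) / (t * (1 - t) + e)) (at t)"
proof -
  note b = basics[OF assms(1)]
  have sp: "sq e > 0" using b(1) by linarith
  have "(QQ e has_real_derivative (R2 e / sq e) / (R1 e - t) + (R1 e / sq e) / (t - R2 e)) (at t)"
    unfolding QQ_def[abs_def] using assms b
    by (auto intro!: derivative_eq_intros simp: mult.commute add.commute)
  moreover have "(R2 e / sq e) / (R1 e - t) + (R1 e / sq e) / (t - R2 e) = (1 - t) / (t * (1 - t) + e)"
    using assms b unfolding qfact[OF assms(1)]
    using alg2[of "R1 e" t "R2 e"] by (simp add: b sp)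
  ultimately show ?thesis by simp
qed

lemma dh: assumes "(e::real) > 0" "R2 e < t" "t < R1 e"
  shows "(hh e has_real_derivative - 1 / (t * (1 - t) + e)) (at t)"
proof -
  note b = basics[OF assms(1)]
  have sp: "sq e > 0" using b(1) by linarith
  have "(hh e has_real_derivative (1 / sq e) * (- 1 / (R1 e - t) - 1 / (t - R2 e))) (at t)"
    unfolding hh_def[abs_def] using assms b
    by (auto intro!: derivative_eq_intros simp: mult.commute add.commute)
  moreover have "(1 / sq e) * (- 1 / (R1 e - t) - 1 / (t - R2 e)) = - 1 / (t * (1 - t) + e)"
  proof -
    have "- 1 / (R1 e - t) - 1 / (t - R2 e) = - (R1 e - R2 e) / ((R1 e - t) * (t - R2 e))"
      using assms by (simp add: field_simps)
    then show ?thesis unfolding qfact[OF assms(1)] b(5) using sp by simp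
  qed
  ultimately show ?thesis by simp
qed

lemma PQh: assumes "(e::real) > 0" "R2 e < t" "t < R1 e"
  shows "PP e t + QQ e t = - hh e t"
proof -
  note b = basics[OF assms(1)]
  have sp: "sq e > 0" using b(1) by linarith
  have "PP e t + QQ e t = ((R1 e + R2 e) / sq e) * (ln (t - R2 e) - ln (R1 e - t))"
    unfolding PP_def QQ_def by (simp add: algebra_simps add_divide_distrib)
  then show ?thesis unfolding hh_def b(4) by (simp add: algebra_simps)
qed

lemma QP0: assumes "(e::real) > 0" shows "QQ e 1 + PP e 0 = 0"
proof -
  note b = basics[OF assms(1)]
  have *: "R1 e - 1 = - R2 e" "1 - R2 e = R1 e" using b(4) by auto
  show ?thesis unfolding PP_def QQ_def * by simp
qed

lemma qpos: assumes "(e::real) > 0" "R2 e < t" "t < R1 e" shows "t * (1 - t) + e > 0"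
  unfolding qfact[OF assms(1)] using assms by simp

lemma dL: assumes "(e::real) > 0" "R2 e < a" "a < R1 e"
  shows "(LL e D has_real_derivative D + hh e a) (at a)"
proof -
  have q: "a * (1 - a) + e > 0" using qpos[OF assms] .
  have d: "(LL e D has_real_derivative
     D + (QQ e 1 - QQ e a) + a * (- ((1 - a) / (a * (1 - a) + e))) - (PP e a - PP e 0) + (1 - a) * (a / (a * (1 - a) + e))) (at a)"
    unfolding LL_def[abs_def]
    by (rule derivative_eq_intros dP[OF assms] dQ[OF assms] refl | simp)+
  have e1: "D + (QQ e 1 - QQ e a) + a * (- ((1 - a) / (a * (1 - a) + e))) - (PP e a - PP e 0) + (1 - a) * (a / (a * (1 - a) + e))
     = D + (QQ e 1 + PP e 0) - (PP e a + QQ e a)" by (simp add: algebra_simps)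
  have e2: "D + (QQ e 1 + PP e 0) - (PP e a + QQ e a) = D + hh e a"
    using PQh[OF assms] QP0[OF assms(1)] by simp
  show ?thesis using d unfolding e1 e2 .
qed

lemma intP: assumes "(e::real) > 0" "0 \<le> a" "a \<le> 1"
  shows "integral {0..a} (\<lambda>t. t / (t * (1 - t) + e)) = PP e a - PP e 0"
proof -
  note b = basics[OF assms(1)]
  have "((\<lambda>t. t / (t * (1 - t) + e)) has_integral (PP e a - PP e 0)) {0..a}"
  proof (rule fundamental_theorem_of_calculus[OF assms(2)])
    fix x assume "x \<in> {0..a}"
    then have "R2 e < x" "x < R1 e" using b assms by auto
    then show "(PP e has_vector_derivative x / (x * (1 - x) + e)) (at x within {0..a})"
      using dP[OF assms(1)] has_field_derivative_at_within has_real_derivative_iff_has_vector_derivative by blast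
  qed
  then show ?thesis by blast
qed

lemma intQ: assumes "(e::real) > 0" "0 \<le> a" "a \<le> 1"
  shows "integral {a..1} (\<lambda>t. (1 - t) / (t * (1 - t) + e)) = QQ e 1 - QQ e a"
proof -
  note b = basics[OF assms(1)]
  have "((\<lambda>t. (1 - t) / (t * (1 - t) + e)) has_integral (QQ e 1 - QQ e a)) {a..1}"
  proof (rule fundamental_theorem_of_calculus[OF assms(3)])
    fix x assume "x \<in> {a..1}"
    then have "R2 e < x" "x < R1 e" using b assms by auto
    then show "(QQ e has_vector_derivative (1 - x) / (x * (1 - x) + e)) (at x within {a..1})"
      using dQ[OF assms(1)] has_field_derivative_at_within has_real_derivative_iff_has_vector_derivative by blast
  qed
  then show ?thesis by blast
qed

lemma LB_LL: assumes "(e::real) > 0" "0 \<le> a" "a \<le> 1" shows "LB a e D = LL e D a"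
  unfolding LB_def LL_def intP[OF assms] intQ[OF assms] by simp

lemma conc_gen:
  fixes f g :: "real \<Rightarrow> real"
  assumes der: "\<And>x. a \<le> x \<Longrightarrow> x \<le> b \<Longrightarrow> (f has_real_derivative g x) (at x)"
    and dec: "\<And>x y. a \<le> x \<Longrightarrow> x < y \<Longrightarrow> y \<le> b \<Longrightarrow> g y < g x"
    and xy: "a \<le> x" "x < y" "y \<le> b" and u: "0 < u" "u < 1"
  shows "f (u * x + (1 - u) * y) > u * f x + (1 - u) * f y"
proof -
  define z where "z = u * x + (1 - u) * y"
  have zx: "z - x = (1 - u) * (y - x)" by (simp add: z_def algebra_simps)
  have yz: "y - z = u * (y - x)" by (simp add: z_def algebra_simps)
  have p1: "0 < (1 - u) * (y - x)" using xy u by simp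
  have p2: "0 < u * (y - x)" using xy u by simp
  have xz1: "x < z" using zx p1 by linarith
  have xz2: "z < y" using yz p2 by linarith
  note xz = xz1 xz2
  have cont: "continuous_on {p..q} f" if "a \<le> p" "q \<le> b" for p q
    using that by (intro continuous_at_imp_continuous_on ballI DERIV_isCont[OF der]) auto
  obtain l1 c1 where c1: "x < c1" "c1 < z" "DERIV f c1 :> l1" "f z - f x = (z - x) * l1"
    using MVT[OF xz(1) cont] der xy xz real_differentiable_def by (smt (verit) atLeastAtMost_iff) 
  obtain l2 c2 where c2: "z < c2" "c2 < y" "DERIV f c2 :> l2" "f y - f z = (y - z) * l2"
    using MVT[OF xz(2) cont] der xy xz real_differentiable_def by (smt (verit) atLeastAtMost_iff)
  have l1: "l1 = g c1" using DERIV_unique[OF c1(3) der] c1 xy xz by auto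
  have l2: "l2 = g c2" using DERIV_unique[OF c2(3) der] c2 xy xz by auto
  have gl: "g c2 < g c1" using dec c1 c2 xy xz by auto
  have "f z - (u * f x + (1 - u) * f y) = u * (f z - f x) - (1 - u) * (f y - f z)" by (simp add: algebra_simps)
  also have "\<dots> = u * (1 - u) * (y - x) * (g c1 - g c2)"
    unfolding c1(4) c2(4) zx yz l1 l2 by (simp add: algebra_simps)
  also have "\<dots> > 0" using u xy gl by simp
  finally show ?thesis unfolding z_def by simp
qed

lemma hform: assumes "(e::real) > 0" "R2 e < a" "a < R1 e"
  shows "(1 / sqrt (1 + 4 * e)) * ln \<bar>(a - (1 + sqrt (1 + 4 * e)) / 2) / (a - (1 - sqrt (1 + 4 * e)) / 2)\<bar> = hh e a"
proof -
  have "\<bar>(a - R1 e) / (a - R2 e)\<bar> = (R1 e - a) / (a - R2 e)" using assms by (simp add: abs_div)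
  moreover have "ln ((R1 e - a) / (a - R2 e)) = ln (R1 e - a) - ln (a - R2 e)" using assms by (simp add: ln_div)
  ultimately show ?thesis unfolding hh_def by (simp add: R1_def R2_def sq_def)
qed

lemma hdec: assumes "(e::real) > 0" "0 \<le> x" "x < y" "y \<le> 1" shows "hh e y < hh e x"
proof -
  note b = basics[OF assms(1)]
  show ?thesis
  proof (rule DERIV_neg_imp_decreasing[OF assms(3)])
    fix t assume "x \<le> t" "t \<le> y"
    then have t: "R2 e < t" "t < R1 e" using assms b by auto
    show "\<exists>d. DERIV (hh e) t :> d \<and> d < 0"
      using dh[OF assms(1) t] qpos[OF assms(1) t] by (intro exI[of _ "- 1 / (t * (1 - t) + e)"]) simp
  qed
qed

theorem lemma4:
  fixes \<epsilon> \<Delta> :: real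
  assumes "\<epsilon> > 0"
  shows "(\<forall>\<alpha>\<in>{0..1}.
            ((\<lambda>a. LB a \<epsilon> \<Delta>) has_real_derivative
               (\<Delta> + (1 / sqrt (1 + 4 * \<epsilon>)) *
                  ln \<bar>(\<alpha> - (1 + sqrt (1 + 4 * \<epsilon>)) / 2) / (\<alpha> - (1 - sqrt (1 + 4 * \<epsilon>)) / 2)\<bar>))
              (at \<alpha> within {0..1}))
       \<and> (\<forall>\<alpha>\<in>{0..1}.
            ((\<lambda>a. \<Delta> + (1 / sqrt (1 + 4 * \<epsilon>)) *
                  ln \<bar>(a - (1 + sqrt (1 + 4 * \<epsilon>)) / 2) / (a - (1 - sqrt (1 + 4 * \<epsilon>)) / 2)\<bar>)
              has_real_derivative (- 1 / (\<alpha> * (1 - \<alpha>) + \<epsilon>))) (at \<alpha> within {0..1}))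
       \<and> strictly_concave_on {0..1} (\<lambda>a. LB a \<epsilon> \<Delta>)"
proof -
  note b = basics[OF assms]
  have inR: "R2 \<epsilon> < a" "a < R1 \<epsilon>" if "a \<in> {0..1}" for a using that b by auto
  have P1: "((\<lambda>a. LB a \<epsilon> \<Delta>) has_real_derivative
               (\<Delta> + (1 / sqrt (1 + 4 * \<epsilon>)) *
                  ln \<bar>(\<alpha> - (1 + sqrt (1 + 4 * \<epsilon>)) / 2) / (\<alpha> - (1 - sqrt (1 + 4 * \<epsilon>)) / 2)\<bar>))
              (at \<alpha> within {0..1})" if al: "\<alpha> \<in> {0..1}" for \<alpha>
  proof -
    have "(LL \<epsilon> \<Delta> has_real_derivative \<Delta> + hh \<epsilon> \<alpha>) (at \<alpha> within {0..1})"
      using dL[OF assms inR[OF al]] by (rule has_field_derivative_at_within)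
    then have "((\<lambda>a. LB a \<epsilon> \<Delta>) has_real_derivative \<Delta> + hh \<epsilon> \<alpha>) (at \<alpha> within {0..1})"
      by (rule has_field_derivative_transform_within[OF _ zero_less_one al]) (simp add: LB_LL[OF assms])
    then show ?thesis using hform[OF assms inR[OF al]] by simp
  qed
  have P2: "((\<lambda>a. \<Delta> + (1 / sqrt (1 + 4 * \<epsilon>)) *
                  ln \<bar>(a - (1 + sqrt (1 + 4 * \<epsilon>)) / 2) / (a - (1 - sqrt (1 + 4 * \<epsilon>)) / 2)\<bar>)
              has_real_derivative (- 1 / (\<alpha> * (1 - \<alpha>) + \<epsilon>))) (at \<alpha> within {0..1})"
    if al: "\<alpha> \<in> {0..1}" for \<alpha>
  proof -
    have "((\<lambda>a. \<Delta> + hh \<epsilon> a) has_real_derivative (- 1 / (\<alpha> * (1 - \<alpha>) + \<epsilon>))) (at \<alpha>)"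
      using DERIV_add[OF DERIV_const dh[OF assms inR[OF al]]] by simp
    then have "((\<lambda>a. \<Delta> + (1 / sqrt (1 + 4 * \<epsilon>)) *
                  ln \<bar>(a - (1 + sqrt (1 + 4 * \<epsilon>)) / 2) / (a - (1 - sqrt (1 + 4 * \<epsilon>)) / 2)\<bar>)
              has_real_derivative (- 1 / (\<alpha> * (1 - \<alpha>) + \<epsilon>))) (at \<alpha>)"
      by (rule has_field_derivative_transform_within_open[where S="{R2 \<epsilon><..<R1 \<epsilon>}"])
        (use inR[OF al] hform[OF assms] in auto)
    then show ?thesis by (rule has_field_derivative_at_within)
  qed
  have P3: "strictly_concave_on {0..1} (\<lambda>a. LB a \<epsilon> \<Delta>)"
    unfolding strictly_concave_on_def
  proof (intro conjI ballI allI impI)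
    show "convex {0..1::real}" by (rule convex_real_interval)
    fix x y u :: real assume xy: "x \<in> {0..1}" "y \<in> {0..1}" and h: "x \<noteq> y \<and> 0 < u \<and> u < 1"
    have der: "(LL \<epsilon> \<Delta> has_real_derivative \<Delta> + hh \<epsilon> t) (at t)" if "0 \<le> t" "t \<le> 1" for t
      using dL[OF assms inR] that by auto
    have dec: "\<Delta> + hh \<epsilon> t < \<Delta> + hh \<epsilon> s" if "0 \<le> s" "s < t" "t \<le> 1" for s t
      using hdec[OF assms that] by simp
    have "u * x + (1 - u) * y \<in> {0..1}"
      using convexD[OF convex_real_interval(5)[of 0 1] xy, of u "1 - u"] h by simp
    then have eqz: "LB (u * x + (1 - u) * y) \<epsilon> \<Delta> = LL \<epsilon> \<Delta> (u * x + (1 - u) * y)"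
      using LB_LL[OF assms] by auto
    have "LL \<epsilon> \<Delta> (u * x + (1 - u) * y) > u * LL \<epsilon> \<Delta> x + (1 - u) * LL \<epsilon> \<Delta> y"
    proof (cases "x < y")
      case True
      then show ?thesis using conc_gen[of 0 1 "LL \<epsilon> \<Delta>" "\<lambda>t. \<Delta> + hh \<epsilon> t", OF der dec, of x y u] xy h by auto
    next
      case False
      then have "y < x" using h by auto
      then have "LL \<epsilon> \<Delta> ((1 - u) * y + (1 - (1 - u)) * x) > (1 - u) * LL \<epsilon> \<Delta> y + (1 - (1 - u)) * LL \<epsilon> \<Delta> x"
        using conc_gen[of 0 1 "LL \<epsilon> \<Delta>" "\<lambda>t. \<Delta> + hh \<epsilon> t", OF der dec, of y x "1 - u"] xy h by auto
      then show ?thesis by (simp add: algebra_simps)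
    qed
    then show "u * LB x \<epsilon> \<Delta> + (1 - u) * LB y \<epsilon> \<Delta> < LB (u * x + (1 - u) * y) \<epsilon> \<Delta>"
      using eqz LB_LL[OF assms] xy by auto
  qed
  show ?thesis using P1 P2 P3 by blast
qed

end
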